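(* Let $I\subsetneq S$ be a monomial ideal. If $I$ is $k$-clean for some integer $k\ge 0$, then $S/I$ is clean. Conversely, if $S/I$ is clean, then $I$ is $k$-clean for some integer $k\geq 0$.
   Context: $S=K[x_1,\dots,x_n]$ is a polynomial ring over a field $K$. For a monomial $u=x_1^{a_1}\cdots x_n^{a_n}$, $\mathrm{supp}(u)=\{i: a_i>0\}$. For an ideal $I$, $\min(I)$ denotes the set of prime ideals of $S$ that are minimal among primes containing $I$. A monomial $u\neq 1$ with $u\notin I$ is a cleaner monomial of the monomial ideal $I$ if $\min(I+Su)\subseteq \min(I)$. For an integer $k\ge 0$, the class of $k$-clean monomial ideals is defined recursively (as the smallest class closed under the following rule): a proper monomial ideal $I$ is $k$-clean if either $I$ is a prime ideal, or $I$ has no embedded prime ideals (i.e. $\mathrm{Ass}(S/I)=\min(I)$) and there exists a cleaner monomial $u$ of $I$ with $|\mathrm{supp}(u)|\le k+1$ such that both $I:u$ and $I+Su$ are $k$-clean. $S/I$ is clean if there is a chain of $\mathbb{Z}^n$-graded submodules $0=M_0\subset M_1\subset\cdots\subset M_r=S/I$ with multigraded isomorphisms $M_i/M_{i-1}\cong (S/P_i)(-\mathbf{a}_i)$ for some $\mathbf a_i\in\mathbb Z^n$ and monomial prime ideals $P_i$, such that $\{P_1,\dots,P_r\}\subseteq \min(I)$. *)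

theory Defs
  imports Main "HOL-Library.Poly_Mapping"
begin

text \<open>The polynomial ring S = K[x_j : j in 'n] over a field K, with a finite index
type 'n of cardinality n. A polynomial is a finitely supported map from exponent
vectors (monomials) to coefficients.\<close>

type_synonym ('n, 'k) S = "('n \<Rightarrow>\<^sub>0 nat) \<Rightarrow>\<^sub>0 'k"

definition monom :: "('n \<Rightarrow>\<^sub>0 nat) \<Rightarrow> ('n, 'k::field) S" where
  "monom a = Poly_Mapping.single a 1"

definition is_monomial :: "('n, 'k::field) S \<Rightarrow> bool" where
  "is_monomial u \<longleftrightarrow> (\<exists>a. u = monom a)"

definition supp :: "('n \<Rightarrow>\<^sub>0 nat) \<Rightarrow> 'n set" where
  "supp a = Poly_Mapping.keys a"

definition is_ideal :: "'r::comm_ring_1 set \<Rightarrow> bool" where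
  "is_ideal I \<longleftrightarrow> 0 \<in> I \<and> (\<forall>a\<in>I. \<forall>b\<in>I. a + b \<in> I) \<and> (\<forall>s. \<forall>a\<in>I. s * a \<in> I)"

definition ideal_span :: "'r::comm_ring_1 set \<Rightarrow> 'r set" where
  "ideal_span G = \<Inter>{J. is_ideal J \<and> G \<subseteq> J}"

definition prime_ideal :: "'r::comm_ring_1 set \<Rightarrow> bool" where
  "prime_ideal P \<longleftrightarrow> is_ideal P \<and> P \<noteq> UNIV \<and> (\<forall>a b. a * b \<in> P \<longrightarrow> a \<in> P \<or> b \<in> P)"

definition minprimes :: "'r::comm_ring_1 set \<Rightarrow> 'r set set" where
  "minprimes I = {P. prime_ideal P \<and> I \<subseteq> P \<and>
       (\<forall>Q. prime_ideal Q \<and> I \<subseteq> Q \<and> Q \<subseteq> P \<longrightarrow> Q = P)}"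

text \<open>Ideal quotient I : f  (= annihilator of the class of f in S/I).\<close>
definition colon :: "'r::comm_ring_1 set \<Rightarrow> 'r \<Rightarrow> 'r set" where
  "colon I f = {g. g * f \<in> I}"

text \<open>Ass(S/I): prime ideals that are annihilators of elements of S/I.\<close>
definition Ass :: "'r::comm_ring_1 set \<Rightarrow> 'r set set" where
  "Ass I = {P. prime_ideal P \<and> (\<exists>f. P = colon I f)}"

definition add_principal :: "'r::comm_ring_1 set \<Rightarrow> 'r \<Rightarrow> 'r set" where
  "add_principal I u = {a + s * u | a s. a \<in> I}"

definition monomial_ideal :: "('n, 'k::field) S set \<Rightarrow> bool" where
  "monomial_ideal I \<longleftrightarrow> (\<exists>G. (\<forall>g\<in>G. is_monomial g) \<and> I = ideal_span G)"

definition cleaner_monomial :: "('n, 'k::field) S set \<Rightarrow> ('n \<Rightarrow>\<^sub>0 nat) \<Rightarrow> bool" where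
  "cleaner_monomial I a \<longleftrightarrow> a \<noteq> 0 \<and> monom a \<notin> I \<and>
     minprimes (add_principal I (monom a)) \<subseteq> minprimes I"

inductive kclean :: "nat \<Rightarrow> ('n, 'k::field) S set \<Rightarrow> bool" for k :: nat where
  prime: "monomial_ideal I \<Longrightarrow> I \<noteq> UNIV \<Longrightarrow> prime_ideal I \<Longrightarrow> kclean k I"
| step: "monomial_ideal I \<Longrightarrow> I \<noteq> UNIV \<Longrightarrow> Ass I = minprimes I \<Longrightarrow>
         cleaner_monomial I a \<Longrightarrow> card (supp a) \<le> k + 1 \<Longrightarrow>
         kclean k (colon I (monom a)) \<Longrightarrow> kclean k (add_principal I (monom a)) \<Longrightarrow>
         kclean k I"

text \<open>Z^n-grading: f is homogeneous of degree d (d in Z^n) if all its monomials have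
exponent vector d.  The homogeneous component of f of degree m is its term at m.\<close>
definition homog :: "('n \<Rightarrow> int) \<Rightarrow> ('n, 'k::field) S \<Rightarrow> bool" where
  "homog d f \<longleftrightarrow> (\<forall>m\<in>Poly_Mapping.keys f. (\<lambda>j. int (Poly_Mapping.lookup m j)) = d)"

definition graded :: "('n, 'k::field) S set \<Rightarrow> bool" where
  "graded N \<longleftrightarrow> (\<forall>f\<in>N. \<forall>m. Poly_Mapping.single m (Poly_Mapping.lookup f m) \<in> N)"

text \<open>phi (on representatives) induces a multigraded S-module isomorphism
(S/P)(-a) \<cong> N/N' (for ideals N' \<subseteq> N of S).\<close>
definition graded_iso ::
  "('n, 'k::field) S set \<Rightarrow> ('n \<Rightarrow> int) \<Rightarrow> ('n, 'k) S set \<Rightarrow> ('n, 'k) S set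
     \<Rightarrow> (('n, 'k) S \<Rightarrow> ('n, 'k) S) \<Rightarrow> bool" where
  "graded_iso P a N N' \<phi> \<longleftrightarrow>
     (\<forall>h. \<phi> h \<in> N) \<and>
     (\<forall>h1 h2. h1 - h2 \<in> P \<longleftrightarrow> \<phi> h1 - \<phi> h2 \<in> N') \<and>
     (\<forall>y\<in>N. \<exists>h. y - \<phi> h \<in> N') \<and>
     (\<forall>h1 h2. \<phi> (h1 + h2) - (\<phi> h1 + \<phi> h2) \<in> N') \<and>
     (\<forall>s h. \<phi> (s * h) - s * \<phi> h \<in> N') \<and>
     (\<forall>b h. homog b h \<longrightarrow> (\<exists>g. homog (\<lambda>j. b j + a j) g \<and> \<phi> h - g \<in> N'))"

definition monomial_prime :: "('n, 'k::field) S set \<Rightarrow> bool" where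
  "monomial_prime P \<longleftrightarrow> prime_ideal P \<and> monomial_ideal P"

text \<open>S/I is clean.  Z^n-graded submodules M_i of S/I are written M_i = N_i/I with
N_i a graded ideal containing I; M_{i+1}/M_i = N_{i+1}/N_i.\<close>
definition clean_quot :: "('n, 'k::field) S set \<Rightarrow> bool" where
  "clean_quot I \<longleftrightarrow> (\<exists>(r::nat) N P a.
      N 0 = I \<and> N r = UNIV \<and>
      (\<forall>i\<le>r. is_ideal (N i) \<and> graded (N i)) \<and>
      (\<forall>i<r. N i \<subset> N (Suc i)) \<and>
      (\<forall>i<r. monomial_prime (P i) \<and> P i \<in> minprimes I \<and>
              (\<exists>\<phi>. graded_iso (P i) (a i) (N (Suc i)) (N i) \<phi>)))"

end

theory Submission
  imports Defs
begin

lemma ideal_zero: "is_ideal I \<Longrightarrow> 0 \<in> I" by (simp add: is_ideal_def)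
lemma ideal_add: "is_ideal I \<Longrightarrow> a \<in> I \<Longrightarrow> b \<in> I \<Longrightarrow> a + b \<in> I" by (simp add: is_ideal_def)
lemma ideal_multL: "is_ideal I \<Longrightarrow> a \<in> I \<Longrightarrow> s * a \<in> I" by (simp add: is_ideal_def)
lemma ideal_multR: "is_ideal I \<Longrightarrow> a \<in> I \<Longrightarrow> a * s \<in> I"
  by (metis ideal_multL mult.commute)
lemma ideal_neg: "is_ideal I \<Longrightarrow> a \<in> I \<Longrightarrow> - a \<in> I"
  by (metis ideal_multL mult_minus1)
lemma ideal_diff: "is_ideal I \<Longrightarrow> a \<in> I \<Longrightarrow> b \<in> I \<Longrightarrow> a - b \<in> I"
  by (metis ideal_add ideal_neg diff_conv_add_uminus)
lemma ideal_one: "is_ideal I \<Longrightarrow> 1 \<in> I \<Longrightarrow> I = UNIV"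
  by (metis UNIV_eq_I ideal_multL mult.right_neutral)
lemma ideal_UNIV: "is_ideal (UNIV::'r::comm_ring_1 set)" by (simp add: is_ideal_def)
lemma prime_ideal_ideal: "prime_ideal P \<Longrightarrow> is_ideal P" by (simp add: prime_ideal_def)
lemma prime_one: "prime_ideal P \<Longrightarrow> 1 \<notin> P"
  using ideal_one prime_ideal_def by blast
lemma prime_mult: "prime_ideal P \<Longrightarrow> a * b \<in> P \<Longrightarrow> a \<in> P \<or> b \<in> P"
  by (simp add: prime_ideal_def)
lemma prime_power: assumes "prime_ideal P" shows "s ^ n \<in> P \<Longrightarrow> s \<in> P"
proof (induction n)
  case 0 then show ?case using prime_one[OF assms] by simp
next
  case (Suc n)
  then have "s * s ^ n \<in> P" by simp
  then show ?case using prime_mult[OF assms] Suc.IH by blast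
qed

lemma is_ideal_add_principal: assumes I: "is_ideal I" shows "is_ideal (add_principal I u)"
proof -
  have "0 \<in> add_principal I u" unfolding add_principal_def
    by (intro CollectI exI[of _ 0] exI[of _ 0]) (simp add: ideal_zero[OF I])
  moreover have "a + b \<in> add_principal I u" if ha: "a \<in> add_principal I u" and hb: "b \<in> add_principal I u" for a b
  proof -
    obtain x s where "a = x + s * u" "x \<in> I" using ha unfolding add_principal_def by blast
    moreover obtain y t where "b = y + t * u" "y \<in> I" using hb unfolding add_principal_def by blast
    ultimately show ?thesis unfolding add_principal_def
      by (intro CollectI exI[of _ "x + y"] exI[of _ "s + t"]) (simp add: algebra_simps ideal_add[OF I])
  qed
  moreover have "s * a \<in> add_principal I u" if ha: "a \<in> add_principal I u" for s a
  proof -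
    obtain x t where "a = x + t * u" "x \<in> I" using ha unfolding add_principal_def by blast
    then show ?thesis unfolding add_principal_def
      by (intro CollectI exI[of _ "s * x"] exI[of _ "s * t"]) (simp add: algebra_simps ideal_multL[OF I])
  qed
  ultimately show ?thesis unfolding is_ideal_def by blast
qed

lemma add_principal_sub: "is_ideal I \<Longrightarrow> I \<subseteq> add_principal I u"
proof
  fix x assume "x \<in> I" then show "x \<in> add_principal I u"
    unfolding add_principal_def by (intro CollectI exI[of _ x] exI[of _ 0]) simp
qed
lemma u_in_add_principal: "is_ideal I \<Longrightarrow> u \<in> add_principal I u"
  unfolding add_principal_def by (intro CollectI exI[of _ 0] exI[of _ 1]) (simp add: ideal_zero)
lemma add_principal_least: "is_ideal J \<Longrightarrow> I \<subseteq> J \<Longrightarrow> u \<in> J \<Longrightarrow> add_principal I u \<subseteq> J"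
  unfolding add_principal_def using ideal_add ideal_multL by blast
lemma is_ideal_colon: assumes "is_ideal I" shows "is_ideal (colon I u)"
proof -
  have "0 \<in> colon I u" using assms ideal_zero by (simp add: colon_def)
  moreover have "a + b \<in> colon I u" if "a \<in> colon I u" "b \<in> colon I u" for a b
    using that assms ideal_add by (simp add: colon_def distrib_right)
  moreover have "s * a \<in> colon I u" if "a \<in> colon I u" for s a
    using that assms ideal_multL by (simp add: colon_def mult.assoc)
  ultimately show ?thesis unfolding is_ideal_def by blast
qed
lemma colon_sub: "is_ideal I \<Longrightarrow> I \<subseteq> colon I u"
  unfolding colon_def using ideal_multR by blast
lemma colon_colon: "colon (colon I u) f = colon I (f * u)"
  unfolding colon_def by (simp add: mult.assoc)

lemma add_principal_cong: assumes "is_ideal J" "v - w \<in> J"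
  shows "add_principal J v = add_principal J w"
proof -
  have *: "add_principal J v \<subseteq> add_principal J w" if "v - w \<in> J" for v w
  proof
    fix y assume "y \<in> add_principal J v"
    then obtain a s where "y = a + s * v" "a \<in> J" unfolding add_principal_def by blast
    moreover have "a + s * (v - w) \<in> J" using assms(1) \<open>v - w \<in> J\<close> \<open>a \<in> J\<close> ideal_add ideal_multL by blast
    moreover have "y = (a + s * (v - w)) + s * w" using \<open>y = a + s * v\<close> by (simp add: algebra_simps)
    ultimately show "y \<in> add_principal J w" unfolding add_principal_def by blast
  qed
  have "w - v \<in> J" using assms ideal_neg by fastforce
  then show ?thesis using * assms by blast
qed

lemma colon_cong: assumes "is_ideal J" "v - w \<in> J"
  shows "colon J v = colon J w"
proof -
  have d: "g * v - g * w \<in> J" for g using ideal_multL[OF assms(1) assms(2), of g]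
    by (simp add: algebra_simps)
  have "g * v \<in> J \<longleftrightarrow> g * w \<in> J" for g
  proof
    assume "g * v \<in> J"
    moreover have "g * w = g * v - (g * v - g * w)" by simp
    ultimately show "g * w \<in> J" using d assms(1) ideal_diff by metis
  next
    assume "g * w \<in> J"
    moreover have "g * v = (g * v - g * w) + g * w" by simp
    ultimately show "g * v \<in> J" using d assms(1) ideal_add by metis
  qed
  then show ?thesis unfolding colon_def by blast
qed

lemma add_principal_unit: assumes "e * e' = 1"
  shows "add_principal J (e * w) = add_principal J w"
  unfolding add_principal_def
proof (intro set_eqI iffI)
  fix y assume "y \<in> {a + s * (e * w) |a s. a \<in> J}"
  then obtain a s where "y = a + s * (e * w)" "a \<in> J" by blast
  then show "y \<in> {a + s * w |a s. a \<in> J}" by (intro CollectI exI[of _ a] exI[of _ "s * e"]) (auto simp: algebra_simps)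
next
  fix y assume "y \<in> {a + s * w |a s. a \<in> J}"
  then obtain a s where "y = a + s * w" "a \<in> J" by blast
  then have "y = a + (s * e') * (e * w)" using assms by (simp add: algebra_simps) (metis mult.assoc mult.commute mult.right_neutral)
  then show "y \<in> {a + s * (e * w) |a s. a \<in> J}" using \<open>a \<in> J\<close> by blast
qed

lemma colon_unit: assumes "is_ideal J" "e * e' = 1"
  shows "colon J (e * w) = colon J w"
  unfolding colon_def
proof (intro set_eqI iffI; simp)
  fix g assume "g * (e * w) \<in> J"
  then have "e' * (g * (e * w)) \<in> J" using assms ideal_multL by blast
  moreover have "e' * (g * (e * w)) = g * w" using assms(2)
    by (metis mult.assoc mult.commute mult.right_neutral)
  ultimately show "g * w \<in> J" by simp
next
  fix g assume "g * w \<in> J"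
  then show "g * (e * w) \<in> J" using assms ideal_multL by (metis mult.assoc mult.commute)
qed

definition filt :: "nat \<Rightarrow> (nat \<Rightarrow> 'r::comm_ring_1 set) \<Rightarrow> (nat \<Rightarrow> 'r set) \<Rightarrow> (nat \<Rightarrow> 'r) \<Rightarrow> bool" where
  "filt r N P U \<longleftrightarrow> (\<forall>i\<le>r. is_ideal (N i)) \<and> N r = UNIV \<and>
     (\<forall>i<r. prime_ideal (P i) \<and> N (Suc i) = add_principal (N i) (U i) \<and> colon (N i) (U i) = P i)"

lemma filt_mono: assumes "filt r N P U" "i \<le> j" "j \<le> r" shows "N i \<subseteq> N j"
  using assms(2,3)
proof (induction j rule: dec_induct)
  case base then show ?case by simp
next
  case (step j)
  have "N j \<subseteq> N (Suc j)" using assms(1) step unfolding filt_def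
    by (metis Suc_le_lessD add_principal_sub less_imp_le_nat)
  then show ?case using step by auto
qed

lemma filt_P_sup: assumes "filt r N P U" "i < r" shows "N i \<subseteq> P i"
  using assms unfolding filt_def by (metis colon_sub less_imp_le_nat)

lemma filt_kill: assumes "filt r N P U" "j \<le> r" "\<forall>i<j. s \<in> P i" "y \<in> N j"
  shows "s ^ j * y \<in> N 0"
  using assms(2-4)
proof (induction j arbitrary: y)
  case 0 then show ?case by simp
next
  case (Suc j)
  have jr: "j < r" using Suc by simp
  then have NS: "N (Suc j) = add_principal (N j) (U j)" and C: "colon (N j) (U j) = P j"
    and Id: "is_ideal (N j)"
    using assms(1) unfolding filt_def by auto
  obtain x h where y: "y = x + h * U j" "x \<in> N j" using Suc.prems(3) NS unfolding add_principal_def by blast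
  have "s * U j \<in> N j" using Suc.prems(2) C unfolding colon_def by auto
  then have "h * (s * U j) \<in> N j" using Id ideal_multL by blast
  moreover have "s * x \<in> N j" using y Id ideal_multL by blast
  moreover have "s * y = s * x + h * (s * U j)" using y by (simp add: algebra_simps)
  ultimately have "s * y \<in> N j" using Id ideal_add by metis
  then have "s ^ j * (s * y) \<in> N 0" using Suc by auto
  moreover have "s ^ Suc j * y = s ^ j * (s * y)" by (simp add: power_Suc2 mult.assoc)
  ultimately show ?case by metis
qed

lemma prod_not_in_prime: assumes "prime_ideal Q" "finite A" "\<forall>i\<in>A. f i \<notin> Q" shows "prod f A \<notin> Q"
  using assms(2,3)
proof (induction A rule: finite_induct)
  case empty then show ?case using prime_one[OF assms(1)] by simp
next
  case (insert x F)
  then have "prod f (insert x F) = f x * prod f F" by simp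
  then show ?case using insert prime_mult[OF assms(1), of "f x" "prod f F"] by auto
qed

lemma prod_in_ideal: assumes "is_ideal P" "finite A" "i \<in> A" "f i \<in> P" shows "prod f A \<in> P"
proof -
  have "prod f A = f i * prod f (A - {i})" using assms by (simp add: prod.remove)
  then show ?thesis using assms ideal_multR by metis
qed

lemma avoid: fixes j :: nat assumes "prime_ideal Q" "\<forall>i<j. is_ideal (P i) \<and> \<not> P i \<subseteq> Q"
  shows "\<exists>s. s \<notin> Q \<and> (\<forall>i<j. s \<in> P i)"
proof -
  define f where "f i = (SOME x. x \<in> P i \<and> x \<notin> Q)" for i
  have f: "f i \<in> P i \<and> f i \<notin> Q" if "i < j" for i
    unfolding f_def by (rule someI_ex) (use assms that in blast)
  have "prod f {..<j} \<notin> Q" by (rule prod_not_in_prime) (use f assms in auto)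
  moreover have "prod f {..<j} \<in> P i" if "i < j" for i
    by (rule prod_in_ideal[of _ _ i]) (use f assms that in auto)
  ultimately show ?thesis by blast
qed

lemma minprimesD: "Q \<in> minprimes I \<Longrightarrow> prime_ideal Q \<and> I \<subseteq> Q \<and>
   (\<forall>Q'. prime_ideal Q' \<and> I \<subseteq> Q' \<and> Q' \<subseteq> Q \<longrightarrow> Q' = Q)"
  by (simp add: minprimes_def)

lemma minprimes_prime: "Q \<in> minprimes I \<Longrightarrow> prime_ideal Q" by (simp add: minprimes_def)
lemma minprimes_sub: "Q \<in> minprimes I \<Longrightarrow> I \<subseteq> Q" by (simp add: minprimes_def)
lemma minprimes_min: "Q \<in> minprimes I \<Longrightarrow> prime_ideal Q' \<Longrightarrow> I \<subseteq> Q' \<Longrightarrow> Q' \<subseteq> Q \<Longrightarrow> Q' = Q"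
  by (simp add: minprimes_def)

lemma filt_min_in: fixes N :: "nat \<Rightarrow> 'a::comm_ring_1 set" assumes F: "filt r N P U" and Q: "Q \<in> minprimes (N 0)"
  shows "\<exists>j<r. P j = Q"
proof (rule ccontr)
  assume "\<not> (\<exists>j<r. P j = Q)"
  have "\<forall>i<r. is_ideal (P i) \<and> \<not> P i \<subseteq> Q"
  proof (intro allI impI conjI)
    fix i assume i: "i < r"
    show "is_ideal (P i)" using F i unfolding filt_def by (auto simp: prime_ideal_def)
    show "\<not> P i \<subseteq> Q"
    proof
      assume "P i \<subseteq> Q"
      moreover have "N 0 \<subseteq> P i" using filt_P_sup[OF F i] filt_mono[OF F, of 0 i] i by auto
      moreover have "prime_ideal (P i)" using F i unfolding filt_def by auto
      ultimately have "P i = Q" using minprimes_min[OF Q] by blast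
      then show False using \<open>\<not> (\<exists>j<r. P j = Q)\<close> i by blast
    qed
  qed
  moreover have PQ: "prime_ideal Q" using minprimes_prime[OF Q] by simp
  ultimately obtain s where s: "s \<notin> Q" "\<forall>i<r. s \<in> P i" using avoid[of Q r P] by blast
  have "(1::'a) \<in> N r" using F by (simp add: filt_def)
  then have "s ^ r * 1 \<in> N 0" using filt_kill[OF F le_refl s(2)] by blast
  then have "s ^ r \<in> Q" using minprimes_sub[OF Q] by auto
  then show False using prime_power[OF PQ] s(1) by blast
qed

lemma filt_min_Ass: assumes F: "filt r N P U" and Q: "Q \<in> minprimes (N 0)"
  shows "Q \<in> Ass (N 0)"
proof -
  define j where "j = (LEAST j. j < r \<and> P j = Q)"
  have ex: "\<exists>j. j < r \<and> P j = Q" using filt_min_in[OF F Q] by blast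
  have j: "j < r" "P j = Q" using LeastI_ex[OF ex] unfolding j_def by auto
  have notj: "P i \<noteq> Q" if "i < j" for i
  proof -
    have "\<not> (i < r \<and> P i = Q)" by (rule not_less_Least) (use that in \<open>simp add: j_def\<close>)
    then show ?thesis using j that by auto
  qed
  have PQ: "prime_ideal Q" "N 0 \<subseteq> Q" using minprimes_prime[OF Q] minprimes_sub[OF Q] by auto
  have "\<forall>i<j. is_ideal (P i) \<and> \<not> P i \<subseteq> Q"
  proof (intro allI impI conjI)
    fix i assume i: "i < j"
    show "is_ideal (P i)" using F i j unfolding filt_def by (auto simp: prime_ideal_def)
    show "\<not> P i \<subseteq> Q"
    proof
      assume "P i \<subseteq> Q"
      moreover have "N 0 \<subseteq> P i" using filt_P_sup[OF F, of i] filt_mono[OF F, of 0 i] i j by auto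
      moreover have "prime_ideal (P i)" using F i j unfolding filt_def by auto
      ultimately have "P i = Q" using minprimes_min[OF Q] by blast
      then show False using notj i by blast
    qed
  qed
  then obtain s where s: "s \<notin> Q" "\<forall>i<j. s \<in> P i" using avoid[OF PQ(1), of j P] by blast
  have Cj: "colon (N j) (U j) = Q" and Idj: "is_ideal (N j)" using F j unfolding filt_def by auto
  have N0j: "N 0 \<subseteq> N j" using filt_mono[OF F, of 0 j] j by auto
  have "colon (N 0) (s ^ j * U j) = Q"
  proof (intro set_eqI iffI)
    fix g assume "g \<in> colon (N 0) (s ^ j * U j)"
    then have "(g * s ^ j) * U j \<in> N j" using N0j unfolding colon_def by (auto simp: algebra_simps)
    then have "g * s ^ j \<in> Q" using Cj unfolding colon_def by auto
    moreover have "s ^ j \<notin> Q" using s(1) prime_power PQ by blast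
    ultimately show "g \<in> Q" using PQ prime_mult by blast
  next
    fix g assume "g \<in> Q"
    then have "g * U j \<in> N j" using Cj unfolding colon_def by auto
    then have "s ^ j * (g * U j) \<in> N 0" using filt_kill[OF F _ s(2)] j by auto
    then show "g \<in> colon (N 0) (s ^ j * U j)" unfolding colon_def by (simp add: algebra_simps)
  qed
  then show ?thesis using PQ unfolding Ass_def by blast
qed

lemma filt_Ass: assumes F: "filt r N P U" and A: "Pr \<in> Ass (N 0)"
  shows "\<exists>j<r. Pr \<subseteq> P j"
proof -
  obtain f where Pr: "prime_ideal Pr" "Pr = colon (N 0) f" using A unfolding Ass_def by blast
  have fN0: "f \<notin> N 0" using Pr prime_one unfolding colon_def by fastforce
  have ex: "\<exists>k. f \<in> N k \<and> k \<le> r" using F unfolding filt_def by auto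
  define k where "k = (LEAST k. f \<in> N k \<and> k \<le> r)"
  have k: "f \<in> N k" "k \<le> r" using LeastI_ex[OF ex] unfolding k_def by auto
  have "k \<noteq> 0"
  proof assume "k = 0" then show False using k fN0 by simp qed
  then obtain j where kj: "k = Suc j" using not0_implies_Suc by blast
  have fj: "f \<notin> N j" using not_less_Least[of j "\<lambda>k. f \<in> N k \<and> k \<le> r"] k kj unfolding k_def by auto
  have jr: "j < r" using k kj by auto
  have NS: "N (Suc j) = add_principal (N j) (U j)" and C: "colon (N j) (U j) = P j"
    and Id: "is_ideal (N j)" using F jr unfolding filt_def by auto
  obtain x h where f: "f = x + h * U j" "x \<in> N j" using k(1) kj NS unfolding add_principal_def by blast
  have hP: "h \<notin> P j"
  proof
    assume "h \<in> P j"
    then have "h * U j \<in> N j" using C unfolding colon_def by auto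
    then show False using f fj Id ideal_add by blast
  qed
  have PjP: "prime_ideal (P j)" using F jr unfolding filt_def by auto
  have "Pr \<subseteq> P j"
  proof
    fix p assume "p \<in> Pr"
    then have "p * f \<in> N j" using Pr filt_mono[OF F, of 0 j] jr unfolding colon_def by auto
    moreover have "p * x \<in> N j" using f Id ideal_multL by blast
    moreover have "(p * h) * U j = p * f - p * x" using f by (simp add: algebra_simps)
    ultimately have "(p * h) * U j \<in> N j" using Id ideal_diff by metis
    then have "p * h \<in> P j" using C unfolding colon_def by auto
    then show "p \<in> P j" using hP PjP prime_mult by blast
  qed
  then show ?thesis using jr by blast
qed

lemma span_ideal: "is_ideal (ideal_span G)"
  unfolding ideal_span_def is_ideal_def by auto
lemma span_sub: "G \<subseteq> ideal_span G" unfolding ideal_span_def by blast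
lemma span_least: "is_ideal J \<Longrightarrow> G \<subseteq> J \<Longrightarrow> ideal_span G \<subseteq> J" unfolding ideal_span_def by blast

lemma monomial_ideal_ideal: "monomial_ideal I \<Longrightarrow> is_ideal I"
  using span_ideal monomial_ideal_def by metis

lemma add_principal_span: "add_principal (ideal_span G) u = ideal_span (insert u G)"
proof
  have "ideal_span G \<subseteq> ideal_span (insert u G)"
    by (rule span_least[OF span_ideal]) (use span_sub in blast)
  then show "add_principal (ideal_span G) u \<subseteq> ideal_span (insert u G)"
    by (rule add_principal_least[OF span_ideal]) (use span_sub in blast)
  show "ideal_span (insert u G) \<subseteq> add_principal (ideal_span G) u"
    by (rule span_least) (use is_ideal_add_principal[OF span_ideal] add_principal_sub[OF span_ideal]
        u_in_add_principal[OF span_ideal] span_sub in blast)+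
qed

lemma monomial_add_principal:
  assumes "monomial_ideal I" shows "monomial_ideal (add_principal I (monom a))"
proof -
  obtain G where G: "\<forall>g\<in>G. is_monomial g" "I = ideal_span G" using assms unfolding monomial_ideal_def by blast
  have "\<forall>g\<in>insert (monom a) G. is_monomial g" using G(1) by (auto simp: is_monomial_def)
  moreover have "add_principal I (monom a) = ideal_span (insert (monom a) G)" using G(2) add_principal_span by simp
  ultimately show ?thesis unfolding monomial_ideal_def by blast
qed

lemma homog_single:
  fixes g :: "('n, 'k::field) S"
  assumes "homog d g" "m \<in> Poly_Mapping.keys g"
  shows "g = Poly_Mapping.single m (Poly_Mapping.lookup g m)"
proof (rule poly_mapping_eqI)
  fix k
  show "Poly_Mapping.lookup g k = Poly_Mapping.lookup (Poly_Mapping.single m (Poly_Mapping.lookup g m)) k"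
  proof (cases "k = m")
    case True then show ?thesis by simp
  next
    case False
    have "k \<notin> Poly_Mapping.keys g"
    proof
      assume "k \<in> Poly_Mapping.keys g"
      then have "(\<lambda>j. int (Poly_Mapping.lookup k j)) = (\<lambda>j. int (Poly_Mapping.lookup m j))"
        using assms unfolding homog_def by auto
      then have L: "Poly_Mapping.lookup k = Poly_Mapping.lookup m" by (auto simp: fun_eq_iff)
      have "k = m" by (rule poly_mapping_eqI) (simp add: L)
      then show False using False by simp
    qed
    then show ?thesis using False by (simp add: lookup_single_not_eq in_keys_iff)
  qed
qed

lemma giso_gen:
  fixes P N N' :: "('n, 'k::field) S set"
  assumes G: "graded_iso P a N N' \<phi>" and I': "is_ideal N'" and I: "is_ideal N" and sub: "N' \<subseteq> N"
    and Pp: "prime_ideal P"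
  shows "\<exists>m. N = add_principal N' (monom m) \<and> colon N' (monom m) = P"
proof -
  have g1: "\<forall>h. \<phi> h \<in> N" using G unfolding graded_iso_def by blast
  have g2: "\<forall>h1 h2. h1 - h2 \<in> P \<longleftrightarrow> \<phi> h1 - \<phi> h2 \<in> N'" using G unfolding graded_iso_def by blast
  have g3: "\<forall>y\<in>N. \<exists>h. y - \<phi> h \<in> N'" using G unfolding graded_iso_def by blast
  have g4: "\<forall>h1 h2. \<phi> (h1 + h2) - (\<phi> h1 + \<phi> h2) \<in> N'" using G unfolding graded_iso_def by blast
  have g5: "\<forall>s h. \<phi> (s * h) - s * \<phi> h \<in> N'" using G unfolding graded_iso_def by blast
  have g6: "\<forall>b h. homog b h \<longrightarrow> (\<exists>g. homog (\<lambda>j. b j + a j) g \<and> \<phi> h - g \<in> N')"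
    using G unfolding graded_iso_def by blast
  have "\<phi> (0 + 0) - (\<phi> 0 + \<phi> 0) \<in> N'" using g4 by blast
  then have "- \<phi> 0 \<in> N'" by simp
  then have phi0: "\<phi> 0 \<in> N'" using ideal_neg[OF I'] by fastforce
  have lin: "\<phi> h - h * \<phi> 1 \<in> N'" for h using g5[rule_format, of h 1] by simp
  have NU: "N = add_principal N' (\<phi> 1)"
  proof
    show "N \<subseteq> add_principal N' (\<phi> 1)"
    proof
      fix y assume "y \<in> N"
      then obtain h where h: "y - \<phi> h \<in> N'" using g3 by blast
      have "(y - \<phi> h) + (\<phi> h - h * \<phi> 1) \<in> N'" using h lin I' ideal_add by blast
      moreover have "y = ((y - \<phi> h) + (\<phi> h - h * \<phi> 1)) + h * \<phi> 1" by simp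
      ultimately show "y \<in> add_principal N' (\<phi> 1)" unfolding add_principal_def by blast
    qed
    show "add_principal N' (\<phi> 1) \<subseteq> N" by (rule add_principal_least[OF I sub]) (use g1 in blast)
  qed
  have CU: "colon N' (\<phi> 1) = P"
  proof (intro set_eqI)
    fix g
    have "g * \<phi> 1 \<in> N' \<longleftrightarrow> \<phi> g \<in> N'"
    proof
      assume "g * \<phi> 1 \<in> N'"
      moreover have "\<phi> g = (\<phi> g - g * \<phi> 1) + g * \<phi> 1" by simp
      ultimately show "\<phi> g \<in> N'" using lin I' ideal_add by metis
    next
      assume "\<phi> g \<in> N'"
      moreover have "g * \<phi> 1 = \<phi> g - (\<phi> g - g * \<phi> 1)" by simp
      ultimately show "g * \<phi> 1 \<in> N'" using lin I' ideal_diff by metis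
    qed
    also have "\<dots> \<longleftrightarrow> \<phi> g - \<phi> 0 \<in> N'"
    proof
      assume "\<phi> g \<in> N'" then show "\<phi> g - \<phi> 0 \<in> N'" using phi0 I' ideal_diff by blast
    next
      assume "\<phi> g - \<phi> 0 \<in> N'"
      moreover have "\<phi> g = (\<phi> g - \<phi> 0) + \<phi> 0" by simp
      ultimately show "\<phi> g \<in> N'" using phi0 I' ideal_add by metis
    qed
    also have "\<dots> \<longleftrightarrow> g \<in> P" using g2[rule_format, of g 0] by simp
    finally show "g \<in> colon N' (\<phi> 1) \<longleftrightarrow> g \<in> P" by (simp add: colon_def)
  qed
  have "homog (\<lambda>j. 0) (1 :: ('n, 'k) S)" unfolding homog_def by simp
  then obtain g where gh: "homog (\<lambda>j. 0 + a j) g" "\<phi> 1 - g \<in> N'" using g6 by blast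
  have g0: "g \<noteq> 0"
  proof
    assume "g = 0"
    then have "\<phi> 1 \<in> N'" using gh by simp
    then have "1 \<in> colon N' (\<phi> 1)" by (simp add: colon_def)
    then show False using CU prime_one[OF Pp] by simp
  qed
  then obtain m where m: "m \<in> Poly_Mapping.keys g" by fastforce
  define c where "c = Poly_Mapping.lookup g m"
  have c0: "c \<noteq> 0" using m unfolding c_def by (simp add: in_keys_iff)
  have gs: "g = Poly_Mapping.single 0 c * monom m"
    using homog_single[OF gh(1) m] unfolding c_def monom_def by (simp add: mult_single)
  have e: "Poly_Mapping.single 0 c * Poly_Mapping.single 0 (inverse c) = (1 :: ('n, 'k) S)"
    using c0 by (simp add: mult_single)
  have "N = add_principal N' (monom m)"
    using NU add_principal_cong[OF I' gh(2)] add_principal_unit[OF e] gs by simp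
  moreover have "colon N' (monom m) = P"
    using CU colon_cong[OF I' gh(2)] colon_unit[OF I' e] gs by simp
  ultimately show ?thesis by blast
qed

lemma clean_filt:
  fixes I :: "('n, 'k::field) S set"
  assumes "clean_quot I"
  shows "\<exists>r N P M. filt r N P (\<lambda>i. monom (M i)) \<and> N 0 = I \<and>
           (\<forall>i<r. monomial_prime (P i) \<and> P i \<in> minprimes I)"
proof -
  from assms obtain r N P a where H: "N 0 = I" "N r = UNIV" "\<forall>i\<le>r. is_ideal (N i) \<and> graded (N i)"
    "\<forall>i<r. N i \<subset> N (Suc i)"
    "\<forall>i<r. monomial_prime (P i) \<and> P i \<in> minprimes I \<and> (\<exists>\<phi>. graded_iso (P i) (a i) (N (Suc i)) (N i) \<phi>)"
    unfolding clean_quot_def by blast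
  have ex: "\<exists>m. N (Suc i) = add_principal (N i) (monom m) \<and> colon (N i) (monom m) = P i" if i: "i < r" for i
  proof -
    obtain \<phi> where "graded_iso (P i) (a i) (N (Suc i)) (N i) \<phi>" using H(5) i by blast
    then show ?thesis
      by (rule giso_gen) (use H i in \<open>auto simp: monomial_prime_def\<close>)
  qed
  define M where "M i = (SOME m. N (Suc i) = add_principal (N i) (monom m) \<and> colon (N i) (monom m) = P i)" for i
  have M: "N (Suc i) = add_principal (N i) (monom (M i)) \<and> colon (N i) (monom (M i)) = P i" if "i < r" for i
    unfolding M_def by (rule someI_ex[OF ex[OF that]])
  have "filt r N P (\<lambda>i. monom (M i))"
    unfolding filt_def using H M by (auto simp: monomial_prime_def)
  then show ?thesis using H by blast
qed

lemma d2:
  fixes N :: "nat \<Rightarrow> ('n::finite, 'k::field) S set"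
  assumes "filt r N P (\<lambda>i. monom (M i))" "monomial_ideal (N 0)" "N 0 \<noteq> UNIV"
    "\<forall>i<r. monomial_prime (P i) \<and> P i \<in> minprimes (N 0)"
  shows "kclean (card (UNIV :: 'n set)) (N 0)"
  using assms
proof (induction r arbitrary: N P M)
  case 0 then show ?case by (simp add: filt_def)
next
  case (Suc r)
  note F = Suc.prems(1)
  have C0: "colon (N 0) (monom (M 0)) = P 0" and N1: "N 1 = add_principal (N 0) (monom (M 0))"
    and P0: "prime_ideal (P 0)" and I0: "is_ideal (N 0)"
    using F unfolding filt_def by auto
  have P0m: "monomial_ideal (P 0)" using Suc.prems(4) by (auto simp: monomial_prime_def)
  have kP0: "kclean (card (UNIV :: 'n set)) (P 0)"
    by (rule kclean.prime) (use P0m P0 in \<open>auto simp: prime_ideal_def\<close>)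
  show ?case
  proof (cases "r = 0")
    case True
    then have NU: "N 1 = UNIV" using F unfolding filt_def by simp
    have "N 0 = P 0"
    proof
      show "N 0 \<subseteq> P 0" using C0 colon_sub I0 by blast
      show "P 0 \<subseteq> N 0"
      proof
        fix p assume p: "p \<in> P 0"
        have "1 \<in> add_principal (N 0) (monom (M 0))" using N1 NU by simp
        then obtain x s where xs: "1 = x + s * monom (M 0)" "x \<in> N 0" unfolding add_principal_def by blast
        have "p * monom (M 0) \<in> N 0" using p C0 unfolding colon_def by auto
        then have "s * (p * monom (M 0)) \<in> N 0" using I0 ideal_multL by blast
        moreover have "p * x \<in> N 0" using xs I0 ideal_multL by blast
        moreover have "p = p * x + s * (p * monom (M 0))"
        proof -
          have "p = p * (x + s * monom (M 0))" using xs(1) by simp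
          then show ?thesis by (simp add: algebra_simps)
        qed
        ultimately show "p \<in> N 0" using I0 ideal_add by metis
      qed
    qed
    then show ?thesis using kP0 by simp
  next
    case False
    define N' where "N' i = N (Suc i)" for i
    define P' where "P' i = P (Suc i)" for i
    define M' where "M' i = M (Suc i)" for i
    have Fa: "\<forall>i\<le>Suc r. is_ideal (N i)" and Fb: "N (Suc r) = UNIV"
      and Fc: "\<forall>i<Suc r. prime_ideal (P i) \<and> N (Suc i) = add_principal (N i) (monom (M i)) \<and> colon (N i) (monom (M i)) = P i"
      using F unfolding filt_def by blast+
    have F': "filt r N' P' (\<lambda>i. monom (M' i))"
    proof -
      have a: "\<forall>i\<le>r. is_ideal (N (Suc i))" using Fa by simp
      have c: "\<forall>i<r. prime_ideal (P (Suc i)) \<and> N (Suc (Suc i)) = add_principal (N (Suc i)) (monom (M (Suc i))) \<and>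
          colon (N (Suc i)) (monom (M (Suc i))) = P (Suc i)"
      proof (rule allI, rule impI)
        fix i assume "i < r"
        then have "Suc i < Suc r" by simp
        then show "prime_ideal (P (Suc i)) \<and> N (Suc (Suc i)) = add_principal (N (Suc i)) (monom (M (Suc i))) \<and>
          colon (N (Suc i)) (monom (M (Suc i))) = P (Suc i)" by (rule Fc[rule_format])
      qed
      show ?thesis unfolding filt_def N'_def P'_def M'_def by (intro conjI; (rule a | rule Fb | rule c))
    qed
    have N'0: "N' 0 = N 1" by (simp add: N'_def)
    have I1: "is_ideal (N 1)" using F unfolding filt_def by auto
    have N1U: "N 1 \<noteq> UNIV"
    proof
      assume U: "N 1 = UNIV"
      have "(1::nat) < Suc r" using False by simp
      then have c1: "prime_ideal (P 1) \<and> N (Suc 1) = add_principal (N 1) (monom (M 1)) \<and> colon (N 1) (monom (M 1)) = P 1"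
        by (rule Fc[rule_format])
      then have "colon (N 1) (monom (M 1)) = P 1" "prime_ideal (P 1)" by (rule conjunct2[THEN conjunct2], rule conjunct1)
      then show False using U prime_one by (auto simp: colon_def)
    qed
    have mN1: "monomial_ideal (N 1)" using N1 monomial_add_principal Suc.prems(2) by metis
    have N01: "N 0 \<subseteq> N 1" using filt_mono[OF F, of 0 1] by auto
    have minP': "\<forall>i<r. monomial_prime (P' i) \<and> P' i \<in> minprimes (N' 0)"
    proof (intro allI impI conjI)
      fix i assume i: "i < r"
      show "monomial_prime (P' i)" using Suc.prems(4) i by (auto simp: P'_def)
      have Pm: "P (Suc i) \<in> minprimes (N 0)" using Suc.prems(4) i by auto
      have sup: "N 1 \<subseteq> P (Suc i)" using filt_P_sup[OF F, of "Suc i"] filt_mono[OF F, of 1 "Suc i"] i by auto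
      have "Q = P (Suc i)" if "prime_ideal Q" "N 1 \<subseteq> Q" "Q \<subseteq> P (Suc i)" for Q
        using minprimes_min[OF Pm, of Q] that N01 by blast
      then show "P' i \<in> minprimes (N' 0)"
        unfolding minprimes_def P'_def N'0 using minprimes_prime[OF Pm] sup by blast
    qed
    have IH: "kclean (card (UNIV :: 'n set)) (N 1)" using Suc.IH[OF F'] mN1 N1U minP' unfolding N'0 by blast
    have mins: "minprimes (N 1) \<subseteq> minprimes (N 0)"
    proof
      fix Q assume "Q \<in> minprimes (N 1)"
      then obtain j where "j < r" "P' j = Q" using filt_min_in[OF F'] unfolding N'0 by blast
      then show "Q \<in> minprimes (N 0)" using Suc.prems(4) unfolding P'_def by auto
    qed
    have AssEq: "Ass (N 0) = minprimes (N 0)"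
    proof
      show "Ass (N 0) \<subseteq> minprimes (N 0)"
      proof
        fix Q assume Q: "Q \<in> Ass (N 0)"
        obtain j where j: "j < Suc r" "Q \<subseteq> P j" using filt_Ass[OF F Q] by blast
        obtain f where Qf: "prime_ideal Q" "Q = colon (N 0) f" using Q unfolding Ass_def by blast
        have Qs: "N 0 \<subseteq> Q" using Qf colon_sub[OF I0] by blast
        have Pj: "P j \<in> minprimes (N 0)" using Suc.prems(4) j by auto
        then have "Q = P j" using minprimes_min[OF Pj Qf(1) Qs j(2)] by simp
        then show "Q \<in> minprimes (N 0)" using Pj by simp
      qed
      show "minprimes (N 0) \<subseteq> Ass (N 0)" using filt_min_Ass[OF F] by blast
    qed
    have M0: "M 0 \<noteq> 0"
    proof
      assume "M 0 = 0"
      then have "1 \<in> N 1" using N1 u_in_add_principal[OF I0, of "monom (M 0)"] by (simp add: monom_def)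
      then have "N 1 = UNIV" using ideal_one[OF I1] by simp
      then show False using N1U by simp
    qed
    have notin: "monom (M 0) \<notin> N 0"
    proof
      assume "monom (M 0) \<in> N 0"
      then have "1 \<in> colon (N 0) (monom (M 0))" by (simp add: colon_def)
      then show False using C0 prime_one[OF P0] by simp
    qed
    have cl: "cleaner_monomial (N 0) (M 0)" using M0 notin mins N1 unfolding cleaner_monomial_def by simp
    have "card (supp (M 0)) \<le> card (UNIV :: 'n set)" by (rule card_mono) auto
    then have card: "card (supp (M 0)) \<le> card (UNIV :: 'n set) + 1" by simp
    show ?thesis
      by (rule kclean.step[OF Suc.prems(2) Suc.prems(3) AssEq cl card]) (use kP0 C0 IH N1 in auto)
  qed
qed

lemma dir2:
  fixes I :: "(('n::finite \<Rightarrow>\<^sub>0 nat) \<Rightarrow>\<^sub>0 'k::field) set"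
  assumes "monomial_ideal I" "I \<noteq> UNIV" "clean_quot I"
  shows "\<exists>k. kclean k I"
proof -
  obtain r N P M where H: "filt r N P (\<lambda>i. monom (M i))" "N 0 = I"
    "\<forall>i<r. monomial_prime (P i) \<and> P i \<in> minprimes I"
    using clean_filt[OF assms(3)] by blast
  have "kclean (card (UNIV :: 'n set)) (N 0)" by (rule d2[OF H(1)]) (use H assms in auto)
  then show ?thesis using H by blast
qed

lemma lookup_mult_monom_sum:
  fixes g :: "('n, 'k::field) S"
  shows "Poly_Mapping.lookup (g * Poly_Mapping.single a 1) m = (\<Sum>l. Poly_Mapping.lookup g l when m = l + a)"
proof -
  have inner: "(\<Sum>q. (1 when a = q) when m = l + q) = ((1::'k) when m = l + a)" for l
  proof (cases "m = l + a")
    case True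
    then have eq: "(\<lambda>q. ((1::'k) when a = q) when m = l + q) = (\<lambda>q. 1 when a = q)"
      by (auto simp: fun_eq_iff when_def)
    show ?thesis unfolding eq using True by simp
  next
    case False
    then have eq: "(\<lambda>q. ((1::'k) when a = q) when m = l + q) = (\<lambda>q. 0)"
      by (auto simp: fun_eq_iff when_def)
    show ?thesis unfolding eq using False by simp
  qed
  have "Poly_Mapping.lookup (g * Poly_Mapping.single a 1) m =
      (\<Sum>l. Poly_Mapping.lookup g l * (\<Sum>q. (1 when a = q) when m = l + q))"
    by (simp add: lookup_mult lookup_single)
  also have "\<dots> = (\<Sum>l. Poly_Mapping.lookup g l * (1 when m = l + a))" by (simp only: inner)
  also have "\<dots> = (\<Sum>l. Poly_Mapping.lookup g l when m = l + a)" by (simp add: mult_when)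
  finally show ?thesis .
qed

lemma lookup_mult_monom_hit:
  fixes g :: "('n, 'k::field) S"
  shows "Poly_Mapping.lookup (g * Poly_Mapping.single a 1) (k + a) = Poly_Mapping.lookup g k"
proof -
  have eq: "(\<lambda>l. Poly_Mapping.lookup g l when k + a = l + a) = (\<lambda>l. Poly_Mapping.lookup g l when l = k)"
    by (auto simp: fun_eq_iff when_def)
  show ?thesis unfolding lookup_mult_monom_sum eq by simp
qed

lemma lookup_mult_monom_miss:
  fixes g :: "('n, 'k::field) S"
  assumes "\<forall>k. m \<noteq> k + a"
  shows "Poly_Mapping.lookup (g * Poly_Mapping.single a 1) m = 0"
proof -
  have eq: "(\<lambda>l. Poly_Mapping.lookup g l when m = l + a) = (\<lambda>l. 0)"
    using assms by (auto simp: fun_eq_iff when_def)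
  show ?thesis unfolding lookup_mult_monom_sum eq by simp
qed

lemma span_keys:
  fixes G :: "('n, 'k::field) S set"
  assumes "\<forall>g\<in>G. is_monomial g"
  shows "ideal_span G \<subseteq> {f. \<forall>m\<in>Poly_Mapping.keys f. \<exists>b c. monom b \<in> G \<and> m = b + c}"
    (is "_ \<subseteq> ?T")
proof (rule span_least)
  have "0 \<in> ?T" by simp
  moreover have "f + g \<in> ?T" if "f \<in> ?T" "g \<in> ?T" for f g
    using that keys_add[of f g] by blast
  moreover have "s * f \<in> ?T" if hf: "f \<in> ?T" for s f
  proof (rule CollectI, rule ballI)
    fix m assume "m \<in> Poly_Mapping.keys (s * f)"
    then obtain x y where xy: "m = x + y" "y \<in> Poly_Mapping.keys f" using keys_mult[of s f] by blast
    then obtain b c where "monom b \<in> G" "y = b + c" using hf by blast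
    then show "\<exists>b c. monom b \<in> G \<and> m = b + c" using xy
      by (intro exI[of _ b] exI[of _ "c + x"]) (simp add: algebra_simps)
  qed
  ultimately show "is_ideal ?T" unfolding is_ideal_def by blast
  show "G \<subseteq> ?T"
  proof
    fix g assume g: "g \<in> G"
    then obtain b where "g = monom b" using assms unfolding is_monomial_def by blast
    then show "g \<in> ?T" using g by (auto simp: monom_def)
  qed
qed

lemma monomial_graded:
  fixes I :: "('n, 'k::field) S set"
  assumes "monomial_ideal I" shows "graded I"
  unfolding graded_def
proof (intro ballI allI)
  fix f m assume f: "f \<in> I"
  obtain G where G: "\<forall>g\<in>G. is_monomial g" "I = ideal_span G" using assms unfolding monomial_ideal_def by blast
  show "Poly_Mapping.single m (Poly_Mapping.lookup f m) \<in> I"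
  proof (cases "Poly_Mapping.lookup f m = 0")
    case True then show ?thesis using G(2) ideal_zero[OF span_ideal[of G]] by simp
  next
    case False
    then have "m \<in> Poly_Mapping.keys f" by (simp add: in_keys_iff)
    then obtain b c where bc: "monom b \<in> G" "m = b + c" using span_keys[OF G(1)] f G(2) by blast
    have "Poly_Mapping.single m (Poly_Mapping.lookup f m) = Poly_Mapping.single c (Poly_Mapping.lookup f m) * monom b"
      using bc(2) by (simp add: monom_def mult_single add.commute)
    moreover have "monom b \<in> I" using bc(1) G(2) span_sub by blast
    ultimately show ?thesis using G(2) span_ideal ideal_multL by metis
  qed
qed

definition pm :: "'r::comm_ring_1 set \<Rightarrow> 'r \<Rightarrow> 'r set \<Rightarrow> 'r set" where
  "pm I u J = {x + g * u | x g. x \<in> I \<and> g \<in> J}"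

lemma pm_ideal: assumes I: "is_ideal I" and J: "is_ideal J" shows "is_ideal (pm I u J)"
proof -
  have "0 \<in> pm I u J" unfolding pm_def
    by (intro CollectI exI[of _ 0] exI[of _ 0]) (simp add: ideal_zero[OF I] ideal_zero[OF J])
  moreover have "a + b \<in> pm I u J" if ha: "a \<in> pm I u J" and hb: "b \<in> pm I u J" for a b
  proof -
    obtain x s where "a = x + s * u" "x \<in> I" "s \<in> J" using ha unfolding pm_def by blast
    moreover obtain y t where "b = y + t * u" "y \<in> I" "t \<in> J" using hb unfolding pm_def by blast
    ultimately show ?thesis unfolding pm_def
      by (intro CollectI exI[of _ "x + y"] exI[of _ "s + t"]) (simp add: algebra_simps ideal_add[OF I] ideal_add[OF J])
  qed
  moreover have "s * a \<in> pm I u J" if ha: "a \<in> pm I u J" for s a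
  proof -
    obtain x t where "a = x + t * u" "x \<in> I" "t \<in> J" using ha unfolding pm_def by blast
    then show ?thesis unfolding pm_def
      by (intro CollectI exI[of _ "s * x"] exI[of _ "s * t"]) (simp add: algebra_simps ideal_multL[OF I] ideal_multL[OF J])
  qed
  ultimately show ?thesis unfolding is_ideal_def by blast
qed

lemma pm_colon: assumes I: "is_ideal I" shows "pm I u (colon I u) = I"
proof
  show "pm I u (colon I u) \<subseteq> I"
  proof
    fix y assume "y \<in> pm I u (colon I u)"
    then obtain x g where "y = x + g * u" "x \<in> I" "g * u \<in> I" unfolding pm_def colon_def by blast
    then show "y \<in> I" using ideal_add[OF I] by blast
  qed
  show "I \<subseteq> pm I u (colon I u)"
  proof
    fix y assume "y \<in> I"
    then show "y \<in> pm I u (colon I u)" unfolding pm_def colon_def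
      by (intro CollectI exI[of _ y] exI[of _ 0]) (simp add: ideal_zero[OF I])
  qed
qed

lemma pm_UNIV: "pm I u UNIV = add_principal I u"
  unfolding pm_def add_principal_def by blast

lemma pm_mem: assumes I: "is_ideal I" and J: "is_ideal J" and C: "colon I u \<subseteq> J"
  shows "d * u \<in> pm I u J \<longleftrightarrow> d \<in> J"
proof
  assume "d * u \<in> pm I u J"
  then obtain x g where xg: "d * u = x + g * u" "x \<in> I" "g \<in> J" unfolding pm_def by blast
  then have "(d - g) * u \<in> I" by (simp add: algebra_simps)
  then have "d - g \<in> J" using C unfolding colon_def by blast
  moreover have "d = (d - g) + g" by simp
  ultimately show "d \<in> J" using xg(3) ideal_add[OF J] by metis
next
  assume "d \<in> J"
  then show "d * u \<in> pm I u J" unfolding pm_def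
    by (intro CollectI exI[of _ 0] exI[of _ d]) (simp add: ideal_zero[OF I])
qed

lemma pm_mono: "J \<subseteq> J' \<Longrightarrow> pm I u J \<subseteq> pm I u J'"
  unfolding pm_def by blast

lemma pm_strict: assumes I: "is_ideal I" and J: "is_ideal J" and C: "colon I u \<subseteq> J" and S: "J \<subset> J'"
  shows "pm I u J \<subset> pm I u J'"
proof -
  obtain g where g: "g \<in> J'" "g \<notin> J" using S by blast
  have "g * u \<in> pm I u J'" unfolding pm_def
    by (intro CollectI exI[of _ 0] exI[of _ g]) (simp add: ideal_zero[OF I] g)
  moreover have "g * u \<notin> pm I u J" using pm_mem[OF I J C] g by blast
  ultimately show ?thesis using pm_mono[of J J' I u] S by blast
qed

lemma pm_graded:
  fixes I J :: "('n, 'k::field) S set"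
  assumes I: "is_ideal I" and J: "is_ideal J" and gI: "graded I" and gJ: "graded J"
  shows "graded (pm I (monom a) J)"
  unfolding graded_def
proof (intro ballI allI)
  fix f m assume "f \<in> pm I (monom a) J"
  then obtain x g where f: "f = x + g * monom a" "x \<in> I" "g \<in> J" unfolding pm_def by blast
  have s1: "Poly_Mapping.single m (Poly_Mapping.lookup x m) \<in> I" using gI f(2) unfolding graded_def by blast
  have "\<exists>g'\<in>J. Poly_Mapping.single m (Poly_Mapping.lookup (g * monom a) m) = g' * monom a"
  proof (cases "\<exists>k. m = k + a")
    case True
    then obtain k where k: "m = k + a" by blast
    have "Poly_Mapping.single m (Poly_Mapping.lookup (g * monom a) m) =
        Poly_Mapping.single k (Poly_Mapping.lookup g k) * monom a"
      using k by (simp add: monom_def lookup_mult_monom_hit mult_single)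
    moreover have "Poly_Mapping.single k (Poly_Mapping.lookup g k) \<in> J" using gJ f(3) unfolding graded_def by blast
    ultimately show ?thesis by blast
  next
    case False
    then have "Poly_Mapping.lookup (g * monom a) m = 0"
      unfolding monom_def by (intro lookup_mult_monom_miss) blast
    then show ?thesis using ideal_zero[OF J] by (intro bexI[of _ 0]) auto
  qed
  then obtain g' where g': "g' \<in> J" "Poly_Mapping.single m (Poly_Mapping.lookup (g * monom a) m) = g' * monom a" by blast
  have "Poly_Mapping.single m (Poly_Mapping.lookup f m) =
      Poly_Mapping.single m (Poly_Mapping.lookup x m) + Poly_Mapping.single m (Poly_Mapping.lookup (g * monom a) m)"
    using f(1) by (simp add: lookup_add single_add)
  also have "\<dots> = Poly_Mapping.single m (Poly_Mapping.lookup x m) + g' * monom a" using g'(2) by simp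
  finally show "Poly_Mapping.single m (Poly_Mapping.lookup f m) \<in> pm I (monom a) J"
    unfolding pm_def using s1 g'(1) by blast
qed

lemma homog_mult_monom:
  fixes g :: "('n, 'k::field) S"
  assumes "homog d g"
  shows "homog (\<lambda>j. d j + int (Poly_Mapping.lookup a j)) (g * monom a)"
  unfolding homog_def
proof
  fix m assume "m \<in> Poly_Mapping.keys (g * monom a)"
  then obtain x y where xy: "m = x + y" "x \<in> Poly_Mapping.keys g" "y \<in> Poly_Mapping.keys (monom a :: ('n, 'k) S)"
    using keys_mult[of g "monom a"] by blast
  have y: "y = a" using xy(3) by (simp add: monom_def)
  have dx: "(\<lambda>j. int (Poly_Mapping.lookup x j)) = d" using assms xy(2) unfolding homog_def by blast
  show "(\<lambda>j. int (Poly_Mapping.lookup m j)) = (\<lambda>j. d j + int (Poly_Mapping.lookup a j))"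
    using xy(1) y dx by (auto simp: fun_eq_iff lookup_add)
qed

lemma giso_shift:
  fixes I J J' P :: "('n, 'k::field) S set"
  assumes G: "graded_iso P b J' J \<phi>" and I: "is_ideal I" and iJ: "is_ideal J"
    and C: "colon I (monom a) \<subseteq> J"
  shows "graded_iso P (\<lambda>j. b j + int (Poly_Mapping.lookup a j)) (pm I (monom a) J') (pm I (monom a) J)
           (\<lambda>h. \<phi> h * monom a)"
proof -
  let ?u = "monom a :: ('n, 'k) S"
  have g1: "\<forall>h. \<phi> h \<in> J'" using G unfolding graded_iso_def by blast
  have g2: "\<forall>h1 h2. h1 - h2 \<in> P \<longleftrightarrow> \<phi> h1 - \<phi> h2 \<in> J" using G unfolding graded_iso_def by blast
  have g3: "\<forall>y\<in>J'. \<exists>h. y - \<phi> h \<in> J" using G unfolding graded_iso_def by blast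
  have g4: "\<forall>h1 h2. \<phi> (h1 + h2) - (\<phi> h1 + \<phi> h2) \<in> J" using G unfolding graded_iso_def by blast
  have g5: "\<forall>s h. \<phi> (s * h) - s * \<phi> h \<in> J" using G unfolding graded_iso_def by blast
  have g6: "\<forall>b' h. homog b' h \<longrightarrow> (\<exists>g. homog (\<lambda>j. b' j + b j) g \<and> \<phi> h - g \<in> J)"
    using G unfolding graded_iso_def by blast
  note mem = pm_mem[OF I iJ C]
  have c1: "\<forall>h. \<phi> h * ?u \<in> pm I ?u J'"
  proof
    fix h show "\<phi> h * ?u \<in> pm I ?u J'" unfolding pm_def
      by (intro CollectI exI[of _ 0] exI[of _ "\<phi> h"]) (simp add: ideal_zero[OF I] g1)
  qed
  have c2: "\<forall>h1 h2. h1 - h2 \<in> P \<longleftrightarrow> \<phi> h1 * ?u - \<phi> h2 * ?u \<in> pm I ?u J"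
  proof (intro allI)
    fix h1 h2
    have "\<phi> h1 * ?u - \<phi> h2 * ?u = (\<phi> h1 - \<phi> h2) * ?u" by (simp add: algebra_simps)
    then show "h1 - h2 \<in> P \<longleftrightarrow> \<phi> h1 * ?u - \<phi> h2 * ?u \<in> pm I ?u J" using mem g2 by simp
  qed
  have c3: "\<forall>y\<in>pm I ?u J'. \<exists>h. y - \<phi> h * ?u \<in> pm I ?u J"
  proof
    fix y assume "y \<in> pm I ?u J'"
    then obtain x g where xg: "y = x + g * ?u" "x \<in> I" "g \<in> J'" unfolding pm_def by blast
    then obtain h where h: "g - \<phi> h \<in> J" using g3 by blast
    have "y - \<phi> h * ?u = x + (g - \<phi> h) * ?u" using xg(1) by (simp add: algebra_simps)
    then have "y - \<phi> h * ?u \<in> pm I ?u J" unfolding pm_def using xg(2) h by blast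
    then show "\<exists>h. y - \<phi> h * ?u \<in> pm I ?u J" by blast
  qed
  have c4: "\<forall>h1 h2. \<phi> (h1 + h2) * ?u - (\<phi> h1 * ?u + \<phi> h2 * ?u) \<in> pm I ?u J"
  proof (intro allI)
    fix h1 h2
    have "\<phi> (h1 + h2) * ?u - (\<phi> h1 * ?u + \<phi> h2 * ?u) = (\<phi> (h1 + h2) - (\<phi> h1 + \<phi> h2)) * ?u"
      by (simp add: algebra_simps)
    then show "\<phi> (h1 + h2) * ?u - (\<phi> h1 * ?u + \<phi> h2 * ?u) \<in> pm I ?u J" using mem g4 by simp
  qed
  have c5: "\<forall>s h. \<phi> (s * h) * ?u - s * (\<phi> h * ?u) \<in> pm I ?u J"
  proof (intro allI)
    fix s h
    have "\<phi> (s * h) * ?u - s * (\<phi> h * ?u) = (\<phi> (s * h) - s * \<phi> h) * ?u"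
      by (simp add: algebra_simps)
    then show "\<phi> (s * h) * ?u - s * (\<phi> h * ?u) \<in> pm I ?u J" using mem g5 by simp
  qed
  have c6: "\<forall>b' h. homog b' h \<longrightarrow> (\<exists>g. homog (\<lambda>j. b' j + (b j + int (Poly_Mapping.lookup a j))) g \<and>
       \<phi> h * ?u - g \<in> pm I ?u J)"
  proof (intro allI impI)
    fix b' and h :: "('n, 'k) S" assume "homog b' h"
    then obtain g where g: "homog (\<lambda>j. b' j + b j) g" "\<phi> h - g \<in> J" using g6 by blast
    have "homog (\<lambda>j. (b' j + b j) + int (Poly_Mapping.lookup a j)) (g * ?u)"
      using homog_mult_monom[OF g(1)] by simp
    then have H: "homog (\<lambda>j. b' j + (b j + int (Poly_Mapping.lookup a j))) (g * ?u)"
      by (simp add: add.assoc)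
    have "\<phi> h * ?u - g * ?u = (\<phi> h - g) * ?u" by (simp add: algebra_simps)
    then have "\<phi> h * ?u - g * ?u \<in> pm I ?u J" using mem g(2) by simp
    then show "\<exists>g. homog (\<lambda>j. b' j + (b j + int (Poly_Mapping.lookup a j))) g \<and> \<phi> h * ?u - g \<in> pm I ?u J"
      using H by blast
  qed
  show ?thesis unfolding graded_iso_def using c1 c2 c3 c4 c5 c6 by blast
qed

lemma graded_UNIV: "graded UNIV" by (simp add: graded_def)

lemma chain_mono:
  assumes "\<forall>i<r. N i \<subset> N (Suc i)" "i \<le> j" "j \<le> r" shows "N i \<subseteq> N j"
  using assms(2,3)
proof (induction j rule: dec_induct)
  case base then show ?case by simp
next
  case (step n)
  then have n: "n < r" by simp
  then have "N n \<subseteq> N (Suc n)" using assms(1) by auto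
  moreover have "N i \<subseteq> N n" using step.IH n by simp
  ultimately show ?case by blast
qed

lemma clean_prime:
  fixes I :: "('n, 'k::field) S set"
  assumes m: "monomial_ideal I" and p: "prime_ideal I"
  shows "clean_quot I"
proof -
  have iI: "is_ideal I" using m monomial_ideal_ideal by blast
  have gI: "graded I" using m monomial_graded by blast
  have UI: "I \<noteq> UNIV" using p prime_ideal_def by blast
  have gi: "graded_iso I (\<lambda>_. 0) UNIV I id"
    unfolding graded_iso_def using ideal_zero[OF iI] by auto (metis diff_self)
  have mp: "monomial_prime I" using m p by (simp add: monomial_prime_def)
  have mi: "I \<in> minprimes I" using p unfolding minprimes_def by blast
  define N where "N i = (if i = 0 then I else UNIV)" for i :: nat
  have "N 0 = I" "N 1 = UNIV" by (simp_all add: N_def)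
  moreover have "\<forall>i\<le>1. is_ideal (N i) \<and> graded (N i)"
    using iI gI ideal_UNIV graded_UNIV by (auto simp: N_def le_Suc_eq)
  moreover have "\<forall>i<1. N i \<subset> N (Suc i)" using UI by (auto simp: N_def)
  moreover have "\<forall>i<(1::nat). monomial_prime I \<and> I \<in> minprimes I \<and>
      (\<exists>\<phi>. graded_iso I (\<lambda>_. 0) (N (Suc i)) (N i) \<phi>)"
    using mp mi gi by (auto simp: N_def)
  ultimately show ?thesis unfolding clean_quot_def
    by (intro exI[of _ "1::nat"] exI[of _ N] exI[of _ "\<lambda>_. I"] exI[of _ "\<lambda>_ _. 0"]) auto
qed

lemma dir1:
  fixes I :: "('n, 'k::field) S set"
  shows "kclean k I \<Longrightarrow> clean_quot I"
proof (induction rule: kclean.induct)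
  case (prime I) then show ?case using clean_prime by blast
next
  case (step I a)
  let ?u = "monom a :: ('n, 'k) S"
  have mI: "monomial_ideal I" by fact
  have Ceq: "Ass I = minprimes I" by fact
  have cl: "cleaner_monomial I a" by fact
  have cqC: "clean_quot (colon I ?u)" by fact
  have cqA: "clean_quot (add_principal I ?u)" by fact
  have iI: "is_ideal I" using mI monomial_ideal_ideal by blast
  have gI: "graded I" by (rule monomial_graded[OF mI])
  obtain r1 N1 P1 a1 where H1: "N1 0 = colon I ?u" "N1 r1 = UNIV" "\<forall>i\<le>r1. is_ideal (N1 i) \<and> graded (N1 i)"
    "\<forall>i<r1. N1 i \<subset> N1 (Suc i)"
    "\<forall>i<r1. monomial_prime (P1 i) \<and> P1 i \<in> minprimes (colon I ?u) \<and>
        (\<exists>\<phi>. graded_iso (P1 i) (a1 i) (N1 (Suc i)) (N1 i) \<phi>)"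
    using cqC unfolding clean_quot_def by (elim exE conjE) (rule that; assumption)
  obtain r2 N2 P2 a2 where H2: "N2 0 = add_principal I ?u" "N2 r2 = UNIV" "\<forall>i\<le>r2. is_ideal (N2 i) \<and> graded (N2 i)"
    "\<forall>i<r2. N2 i \<subset> N2 (Suc i)"
    "\<forall>i<r2. monomial_prime (P2 i) \<and> P2 i \<in> minprimes (add_principal I ?u) \<and>
        (\<exists>\<phi>. graded_iso (P2 i) (a2 i) (N2 (Suc i)) (N2 i) \<phi>)"
    using cqA unfolding clean_quot_def by (elim exE conjE) (rule that; assumption)
  have minC: "minprimes (colon I ?u) \<subseteq> minprimes I"
  proof
    fix Q assume Q: "Q \<in> minprimes (colon I ?u)"
    obtain r' N' P' M' where F': "filt r' N' P' (\<lambda>i. monom (M' i))" "N' 0 = colon I ?u"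
      using clean_filt[OF cqC] by blast
    have "Q \<in> Ass (N' 0)" using filt_min_Ass[OF F'(1)] Q F'(2) by simp
    then obtain f where "prime_ideal Q" "Q = colon (colon I ?u) f" using F'(2) unfolding Ass_def by auto
    then have "Q \<in> Ass I" unfolding Ass_def colon_colon by blast
    then show "Q \<in> minprimes I" using Ceq by simp
  qed
  have minA: "minprimes (add_principal I ?u) \<subseteq> minprimes I" using cl unfolding cleaner_monomial_def by blast
  have iN1: "is_ideal (N1 i)" "graded (N1 i)" if "i \<le> r1" for i using H1(3) that by auto
  have N1mono: "colon I ?u \<subseteq> N1 i" if "i \<le> r1" for i
    using chain_mono[OF H1(4), of 0 i] that H1(1) by simp
  define N where "N i = (if i \<le> r1 then pm I ?u (N1 i) else N2 (i - r1))" for i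
  define P where "P i = (if i < r1 then P1 i else P2 (i - r1))" for i
  define A where "A i = (if i < r1 then (\<lambda>j. a1 i j + int (Poly_Mapping.lookup a j)) else a2 (i - r1))" for i
  have Nlo: "N i = pm I ?u (N1 i)" if "i \<le> r1" for i using that by (simp add: N_def)
  have Nhi: "N i = N2 (i - r1)" if "r1 \<le> i" for i
  proof (cases "i = r1")
    case True
    then have "N i = pm I ?u UNIV" using Nlo H1(2) by simp
    then show ?thesis using True pm_UNIV H2(1) by simp
  next
    case False then show ?thesis using that by (simp add: N_def)
  qed
  have f1: "N 0 = I" using Nlo[of 0] H1(1) pm_colon[OF iI] by simp
  have f2: "N (r1 + r2) = UNIV" using Nhi[of "r1 + r2"] H2(2) by simp
  have f3: "\<forall>i\<le>r1 + r2. is_ideal (N i) \<and> graded (N i)"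
  proof (intro allI impI)
    fix i assume i: "i \<le> r1 + r2"
    show "is_ideal (N i) \<and> graded (N i)"
    proof (cases "i \<le> r1")
      case True
      then show ?thesis using Nlo[OF True] pm_ideal[OF iI iN1(1)[OF True]] pm_graded[OF iI iN1(1)[OF True] gI iN1(2)[OF True]]
        by simp
    next
      case False
      then have "i - r1 \<le> r2" using i by simp
      then show ?thesis using Nhi[of i] False H2(3) by simp
    qed
  qed
  have f4: "\<forall>i<r1 + r2. N i \<subset> N (Suc i)"
  proof (intro allI impI)
    fix i assume i: "i < r1 + r2"
    show "N i \<subset> N (Suc i)"
    proof (cases "Suc i \<le> r1")
      case True
      then have "i \<le> r1" "i < r1" by simp_all
      then show ?thesis using Nlo[OF True] Nlo[of i] pm_strict[OF iI iN1(1) N1mono] H1(4) by simp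
    next
      case False
      then have r: "r1 \<le> i" "i - r1 < r2" "Suc i - r1 = Suc (i - r1)" using i by auto
      then show ?thesis using Nhi[of i] Nhi[of "Suc i"] H2(4) by simp
    qed
  qed
  have f5: "\<forall>i<r1 + r2. monomial_prime (P i) \<and> P i \<in> minprimes I \<and>
      (\<exists>\<phi>. graded_iso (P i) (A i) (N (Suc i)) (N i) \<phi>)"
  proof (intro allI impI)
    fix i assume i: "i < r1 + r2"
    show "monomial_prime (P i) \<and> P i \<in> minprimes I \<and> (\<exists>\<phi>. graded_iso (P i) (A i) (N (Suc i)) (N i) \<phi>)"
    proof (cases "i < r1")
      case True
      then have le: "i \<le> r1" "Suc i \<le> r1" by simp_all
      obtain \<phi> where mp: "monomial_prime (P1 i)" "P1 i \<in> minprimes (colon I ?u)"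
        and phi: "graded_iso (P1 i) (a1 i) (N1 (Suc i)) (N1 i) \<phi>" using H1(5) True by blast
      have "graded_iso (P1 i) (\<lambda>j. a1 i j + int (Poly_Mapping.lookup a j)) (pm I ?u (N1 (Suc i))) (pm I ?u (N1 i))
          (\<lambda>h. \<phi> h * ?u)"
        by (rule giso_shift[OF phi iI iN1(1)[OF le(1)] N1mono[OF le(1)]])
      then have "graded_iso (P i) (A i) (N (Suc i)) (N i) (\<lambda>h. \<phi> h * ?u)"
        using Nlo[OF le(1)] Nlo[OF le(2)] True by (simp add: P_def A_def)
      moreover have "monomial_prime (P i) \<and> P i \<in> minprimes I" using mp minC True by (auto simp: P_def)
      ultimately show ?thesis by blast
    next
      case False
      then have r: "r1 \<le> i" "i - r1 < r2" "Suc i - r1 = Suc (i - r1)" using i by auto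
      obtain \<phi> where mp: "monomial_prime (P2 (i - r1))" "P2 (i - r1) \<in> minprimes (add_principal I ?u)"
        and phi: "graded_iso (P2 (i - r1)) (a2 (i - r1)) (N2 (Suc (i - r1))) (N2 (i - r1)) \<phi>"
        using H2(5) r(2) by blast
      have "graded_iso (P i) (A i) (N (Suc i)) (N i) \<phi>"
        using phi Nhi[of i] Nhi[of "Suc i"] r False by (simp add: P_def A_def)
      moreover have "monomial_prime (P i) \<and> P i \<in> minprimes I" using mp minA False by (auto simp: P_def)
      ultimately show ?thesis by blast
    qed
  qed
  have "N 0 = I \<and> N (r1 + r2) = UNIV \<and> (\<forall>i\<le>r1 + r2. is_ideal (N i) \<and> graded (N i)) \<and>
      (\<forall>i<r1 + r2. N i \<subset> N (Suc i)) \<and>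
      (\<forall>i<r1 + r2. monomial_prime (P i) \<and> P i \<in> minprimes I \<and>
        (\<exists>\<phi>. graded_iso (P i) (A i) (N (Suc i)) (N i) \<phi>))"
    by (rule conjI[OF f1 conjI[OF f2 conjI[OF f3 conjI[OF f4 f5]]]])
  then show ?case unfolding clean_quot_def by blast
qed

theorem theorem2p4:
  fixes I :: "(('n::finite \<Rightarrow>\<^sub>0 nat) \<Rightarrow>\<^sub>0 'k::field) set"
  assumes "monomial_ideal I" and "I \<noteq> UNIV"
  shows "((\<exists>k. kclean k I) \<longrightarrow> clean_quot I) \<and> (clean_quot I \<longrightarrow> (\<exists>k. kclean k I))"
  using dir1 dir2[OF assms] by blast

end
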